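(* Let $\mathcal M=(M,<,+,0,\ldots)$ be a definably complete locally o-minimal expansion of an ordered abelian group. Let $C\subseteq M^m$ be a definable, closed and bounded set and let $\varphi,\psi:C\to M_{>0}$ be definable functions such that for every $x\in C$ there is $\delta>0$ with $\varphi(x')\ge\psi(x)$ for all $x'\in C$ satisfying $|x'-x|<\delta$. Then $\inf\varphi(C)>0$.
   Context: Definable = with parameters; definably complete: sup/inf of definable subsets of $M$ exist in $M\cup\{\pm\infty\}$; locally o-minimal: each definable subset of $M$ is, near each point, a finite union of points and open intervals. $M_{>0}=\{x\in M:x>0\}$, $|x|=\max_i|x_i|$. *)

theory Defs
  imports Main
begin

text \<open>Definable (with parameters) = member of some S n.\<close>

definition tuples :: "nat \<Rightarrow> 'a list set" where
  "tuples n = {xs. length xs = n}"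

definition is_structure :: "(nat \<Rightarrow> 'a list set set) \<Rightarrow> bool" where
  "is_structure S \<longleftrightarrow>
     (\<forall>n. \<forall>A\<in>S n. A \<subseteq> tuples n) \<and>
     (\<forall>n. {} \<in> S n) \<and>
     (\<forall>n. \<forall>A\<in>S n. tuples n - A \<in> S n) \<and>
     (\<forall>n. \<forall>A\<in>S n. \<forall>B\<in>S n. A \<union> B \<in> S n) \<and>
     (\<forall>n. \<forall>A\<in>S n. {x # xs | x xs. xs \<in> A} \<in> S (Suc n)) \<and>
     (\<forall>n. \<forall>A\<in>S n. {xs @ [x] | x xs. xs \<in> A} \<in> S (Suc n)) \<and>
     (\<forall>n i j. i < n \<longrightarrow> j < n \<longrightarrow> {xs \<in> tuples n. xs ! i = xs ! j} \<in> S n) \<and>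
     (\<forall>n. \<forall>A\<in>S (Suc n). butlast ` A \<in> S n)"

text \<open>S is a structure expanding (M,<,+,0), with all parameters (singletons) definable.\<close>
definition expands_oag :: "(nat \<Rightarrow> ('a::linordered_ab_group_add) list set set) \<Rightarrow> bool" where
  "expands_oag S \<longleftrightarrow> is_structure S \<and>
     {[x, y] | x y. x < y} \<in> S 2 \<and>
     {[x, y, z] | x y z. x + y = z} \<in> S 3 \<and>
     (\<forall>a. {[a]} \<in> S 1)"

definition definable_set1 :: "(nat \<Rightarrow> 'a list set set) \<Rightarrow> 'a set \<Rightarrow> bool" where
  "definable_set1 S A \<longleftrightarrow> (\<lambda>x. [x]) ` A \<in> S 1"

definition definably_complete :: "(nat \<Rightarrow> ('a::linorder) list set set) \<Rightarrow> bool" where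
  "definably_complete S \<longleftrightarrow>
     (\<forall>A. definable_set1 S A \<longrightarrow> A \<noteq> {} \<longrightarrow> (\<exists>b. \<forall>x\<in>A. x \<le> b) \<longrightarrow>
        (\<exists>s. (\<forall>x\<in>A. x \<le> s) \<and> (\<forall>b. (\<forall>x\<in>A. x \<le> b) \<longrightarrow> s \<le> b))) \<and>
     (\<forall>A. definable_set1 S A \<longrightarrow> A \<noteq> {} \<longrightarrow> (\<exists>b. \<forall>x\<in>A. b \<le> x) \<longrightarrow>
        (\<exists>s. (\<forall>x\<in>A. s \<le> x) \<and> (\<forall>b. (\<forall>x\<in>A. b \<le> x) \<longrightarrow> b \<le> s)))"

definition fin_union_pts_intervals :: "('a::linorder) set \<Rightarrow> bool" where
  "fin_union_pts_intervals X \<longleftrightarrow>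
     (\<exists>P J. finite P \<and> finite J \<and> X = P \<union> (\<Union>(u, v)\<in>J. {u<..<v}))"

definition locally_o_minimal :: "(nat \<Rightarrow> ('a::linorder) list set set) \<Rightarrow> bool" where
  "locally_o_minimal S \<longleftrightarrow>
     (\<forall>A a. definable_set1 S A \<longrightarrow>
        (\<exists>b c. b < a \<and> a < c \<and> fin_union_pts_intervals (A \<inter> {b<..<c})))"

definition supdist :: "('a::linordered_ab_group_add) list \<Rightarrow> 'a list \<Rightarrow> 'a" where
  "supdist xs ys = foldr max (map (\<lambda>(x, y). max (x - y) (y - x)) (zip xs ys)) 0"

definition closed_in_tuples :: "nat \<Rightarrow> ('a::linordered_ab_group_add) list set \<Rightarrow> bool" where
  "closed_in_tuples m C \<longleftrightarrow> C \<subseteq> tuples m \<and>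
     (\<forall>x\<in>tuples m - C. \<exists>e>0. \<forall>y\<in>C. \<not> supdist y x < e)"

definition bounded_tuples :: "('a::linordered_ab_group_add) list set \<Rightarrow> bool" where
  "bounded_tuples C \<longleftrightarrow> (\<exists>R. \<forall>x\<in>C. supdist x (map (\<lambda>_. 0) x) \<le> R)"

definition definable_fun :: "(nat \<Rightarrow> 'a list set set) \<Rightarrow> nat \<Rightarrow> 'a list set \<Rightarrow> ('a list \<Rightarrow> 'a) \<Rightarrow> bool" where
  "definable_fun S m C f \<longleftrightarrow> {xs @ [f xs] | xs. xs \<in> C} \<in> S (Suc m)"

definition is_glb :: "('a::linorder) \<Rightarrow> 'a set \<Rightarrow> bool" where
  "is_glb s A \<longleftrightarrow> (\<forall>x\<in>A. s \<le> x) \<and> (\<forall>b. (\<forall>x\<in>A. b \<le> x) \<longrightarrow> b \<le> s)"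

end

theory Submission
  imports Defs
begin

context
  fixes S :: "nat \<Rightarrow> 'a list set set"
  assumes st: "is_structure S"
begin

lemmas stU = st[unfolded is_structure_def]

lemma S_sub: "A \<in> S n \<Longrightarrow> A \<subseteq> tuples n"
  using stU[THEN conjunct1] by simp

lemma S_empty: "{} \<in> S n"
  using stU[THEN conjunct2, THEN conjunct1] by simp

lemma S_compl: "A \<in> S n \<Longrightarrow> tuples n - A \<in> S n"
  using stU[THEN conjunct2, THEN conjunct2, THEN conjunct1] by simp

lemma S_union: "A \<in> S n \<Longrightarrow> B \<in> S n \<Longrightarrow> A \<union> B \<in> S n"
  using stU[THEN conjunct2, THEN conjunct2, THEN conjunct2, THEN conjunct1] by simp

lemma S_cons: "A \<in> S n \<Longrightarrow> {x # xs | x xs. xs \<in> A} \<in> S (Suc n)"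
  using stU[THEN conjunct2, THEN conjunct2, THEN conjunct2, THEN conjunct2, THEN conjunct1] by simp

lemma S_diag: "i < n \<Longrightarrow> j < n \<Longrightarrow> {xs \<in> tuples n. xs ! i = xs ! j} \<in> S n"
  using stU[THEN conjunct2, THEN conjunct2, THEN conjunct2, THEN conjunct2, THEN conjunct2, THEN conjunct2, THEN conjunct1] by simp

lemma S_butlast: "A \<in> S (Suc n) \<Longrightarrow> butlast ` A \<in> S n"
  using stU[THEN conjunct2, THEN conjunct2, THEN conjunct2, THEN conjunct2, THEN conjunct2, THEN conjunct2, THEN conjunct2] by simp

lemma S_univ: "tuples n \<in> S n"
  using S_compl[OF S_empty] by simp

lemma S_inter: assumes "A \<in> S n" "B \<in> S n" shows "A \<inter> B \<in> S n"
proof -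
  have "A \<inter> B = tuples n - ((tuples n - A) \<union> (tuples n - B))"
    using S_sub[OF assms(1)] S_sub[OF assms(2)] by blast
  thus ?thesis using assms by (simp add: S_compl S_union)
qed

lemma S_prepend: "A \<in> S k \<Longrightarrow> {ws \<in> tuples (j + k). drop j ws \<in> A} \<in> S (j + k)"
proof (induction j)
  case 0
  have eq: "{ws \<in> tuples (0 + k). drop 0 ws \<in> A} = A" using S_sub[OF 0] by (auto simp: tuples_def)
  then show ?case using 0 by simp
next
  case (Suc j)
  have "{x # xs | x xs. xs \<in> {ws \<in> tuples (j + k). drop j ws \<in> A}} = {ws \<in> tuples (Suc j + k). drop (Suc j) ws \<in> A}"
    apply (auto simp: tuples_def)
    subgoal for ws by (cases ws) auto
    done
  then show ?case using S_cons[OF Suc.IH[OF Suc.prems]] by simp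
qed

lemma take_butlast': "n < length xs \<Longrightarrow> take n (butlast xs) = take n xs"
proof -
  assume "n < length xs"
  hence "n \<le> length xs - 1" by simp
  thus ?thesis by (simp add: butlast_conv_take min_absorb1)
qed

lemma S_take: "A \<in> S (n + k) \<Longrightarrow> take n ` A \<in> S n"
proof (induction k arbitrary: A)
  case 0
  have "take n ` A = A" using S_sub[OF 0] by (force simp: tuples_def)
  then show ?case using 0 by simp
next
  case (Suc k)
  have "butlast ` A \<in> S (n + k)" using S_butlast Suc.prems by simp
  from Suc.IH[OF this] have "take n ` butlast ` A \<in> S n" .
  moreover have "take n ` butlast ` A = take n ` A"
    using S_sub[OF Suc.prems] by (force simp: tuples_def image_image take_butlast' intro!: image_cong)
  ultimately show ?case by simp
qed

lemma S_diags: "(\<forall>j'<j. is ! j' < N \<and> n + j' < N) \<Longrightarrow>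
   {ws \<in> tuples N. \<forall>j'<j. ws ! (n + j') = ws ! (is ! j')} \<in> S N"
proof (induction j)
  case 0 then show ?case using S_univ by simp
next
  case (Suc j)
  have eq: "{ws \<in> tuples N. \<forall>j'<Suc j. ws ! (n + j') = ws ! (is ! j')} =
     {ws \<in> tuples N. \<forall>j'<j. ws ! (n + j') = ws ! (is ! j')} \<inter> {ws \<in> tuples N. ws ! (n + j) = ws ! (is ! j)}"
    by (auto simp: less_Suc_eq)
  have f1: "{ws \<in> tuples N. \<forall>j'<j. ws ! (n + j') = ws ! (is ! j')} \<in> S N"
    using Suc by simp
  have f2: "{ws \<in> tuples N. ws ! (n + j) = ws ! (is ! j)} \<in> S N"
    using Suc.prems by (intro S_diag) auto
  show ?case by (subst eq) (rule S_inter[OF f1 f2])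
qed

lemma S_subst:
  assumes A: "A \<in> S (length is)" and i: "\<forall>i\<in>set is. i < n"
  shows "{xs \<in> tuples n. map (nth xs) is \<in> A} \<in> S n"
proof -
  let ?k = "length is"
  let ?B = "{ws \<in> tuples (n + ?k). drop n ws \<in> A}"
  let ?D = "{ws \<in> tuples (n + ?k). \<forall>j'<?k. ws ! (n + j') = ws ! (is ! j')}"
  have B: "?B \<in> S (n + ?k)" using S_prepend[OF A] .
  have ii: "\<forall>j'<?k. is ! j' < n + ?k \<and> n + j' < n + ?k" using i nth_mem by fastforce
  have D: "?D \<in> S (n + ?k)" using S_diags[OF ii] .
  have "take n ` (?B \<inter> ?D) \<in> S n" using S_take S_inter B D by blast
  moreover have "take n ` (?B \<inter> ?D) = {xs \<in> tuples n. map (nth xs) is \<in> A}"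
  proof (intro equalityI subsetI)
    fix xs assume "xs \<in> take n ` (?B \<inter> ?D)"
    then obtain ws where ws: "ws \<in> ?B" "ws \<in> ?D" "xs = take n ws" by blast
    have "drop n ws = map (nth xs) is"
      using ws i by (auto simp: tuples_def intro!: nth_equalityI) 
    then show "xs \<in> {xs \<in> tuples n. map (nth xs) is \<in> A}" using ws by (auto simp: tuples_def)
  next
    fix xs assume xs: "xs \<in> {xs \<in> tuples n. map (nth xs) is \<in> A}"
    let ?ws = "xs @ map (nth xs) is"
    have w1: "?ws \<in> ?B \<inter> ?D" using xs i by (auto simp: tuples_def nth_append)
    have w2: "take n ?ws = xs" using xs by (simp add: tuples_def)
    show "xs \<in> take n ` (?B \<inter> ?D)" by (rule image_eqI[of xs "take n" ?ws, OF w2[symmetric] w1])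
  qed
  ultimately show ?thesis by simp
qed

end

datatype 'a fm = Mem "nat list" "'a list set" | Neg "'a fm" | Conj "'a fm" "'a fm" | Ex "'a fm"

fun sat :: "'a fm \<Rightarrow> 'a list \<Rightarrow> bool" where
  "sat (Mem is A) xs = (map (nth xs) is \<in> A)"
| "sat (Neg f) xs = (\<not> sat f xs)"
| "sat (Conj f g) xs = (sat f xs \<and> sat g xs)"
| "sat (Ex f) xs = (\<exists>y. sat f (xs @ [y]))"

fun fwf :: "(nat \<Rightarrow> 'a list set set) \<Rightarrow> nat \<Rightarrow> 'a fm \<Rightarrow> bool" where
  "fwf S n (Mem is A) = ((\<forall>i\<in>set is. i < n) \<and> A \<in> S (length is))"
| "fwf S n (Neg f) = fwf S n f"
| "fwf S n (Conj f g) = (fwf S n f \<and> fwf S n g)"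
| "fwf S n (Ex f) = fwf S (Suc n) f"

lemma tuples_Suc: "xs \<in> tuples (Suc n) \<longleftrightarrow> (\<exists>ys y. xs = ys @ [y] \<and> length ys = n)"
  by (auto simp: tuples_def) (metis append_butlast_last_id length_butlast length_greater_0_conv zero_less_Suc diff_Suc_1)

lemma fm_definable:
  assumes st: "is_structure S"
  shows "fwf S n f \<Longrightarrow> {xs \<in> tuples n. sat f xs} \<in> S n"
proof (induction f arbitrary: n)
  case (Mem x1 x2)
  then show ?case using S_subst[OF st] by simp
next
  case (Neg f)
  have "{xs \<in> tuples n. sat (Neg f) xs} = tuples n - {xs \<in> tuples n. sat f xs}" by auto
  then show ?case using Neg S_compl[OF st] by simp
next
  case (Conj f1 f2)
  have "{xs \<in> tuples n. sat (Conj f1 f2) xs} = {xs \<in> tuples n. sat f1 xs} \<inter> {xs \<in> tuples n. sat f2 xs}" by auto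
  then show ?case using Conj S_inter[OF st] by simp
next
  case (Ex f)
  have "{xs \<in> tuples n. sat (Ex f) xs} = butlast ` {xs \<in> tuples (Suc n). sat f xs}"
  proof (intro equalityI subsetI)
    fix xs assume "xs \<in> {xs \<in> tuples n. sat (Ex f) xs}"
    then obtain y where y: "sat f (xs @ [y])" "length xs = n" by (auto simp: tuples_def)
    hence "xs @ [y] \<in> {xs \<in> tuples (Suc n). sat f xs}" by (simp add: tuples_def)
    moreover have "xs = butlast (xs @ [y])" by simp
    ultimately show "xs \<in> butlast ` {xs \<in> tuples (Suc n). sat f xs}" by (rule image_eqI[rotated])
  next
    fix xs assume "xs \<in> butlast ` {xs \<in> tuples (Suc n). sat f xs}"
    then obtain ys where ys: "ys \<in> tuples (Suc n)" "sat f ys" "xs = butlast ys" by blast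
    hence ne: "ys \<noteq> []" by (auto simp: tuples_def)
    hence "ys = xs @ [last ys]" using ys by simp
    hence "sat f (xs @ [last ys])" using ys by metis
    moreover have "length xs = n" using ys by (simp add: tuples_def)
    ultimately show "xs \<in> {xs \<in> tuples n. sat (Ex f) xs}" by (auto simp: tuples_def)
  qed
  then show ?case using Ex S_butlast[OF st] by simp
qed

fun Exs :: "nat \<Rightarrow> 'a fm \<Rightarrow> 'a fm" where
  "Exs 0 f = f"
| "Exs (Suc k) f = Ex (Exs k f)"

lemma sat_Exs: "sat (Exs k f) xs = (\<exists>ys. length ys = k \<and> sat f (xs @ ys))"
proof (induction k arbitrary: xs)
  case 0 then show ?case by simp
next
  case (Suc k)
  show ?case
    apply (simp add: Suc)
    apply (rule iffI)
     apply (metis append_Cons append_assoc append_self_conv2 length_Cons)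
    by (metis Suc_length_conv append_Cons append_assoc append_self_conv2)
qed

lemma wf_Exs: "fwf S n (Exs k f) = fwf S (n + k) f"
  by (induction k arbitrary: n) auto


lemma map_nth_app0: "length x = m \<Longrightarrow> map (nth (x @ ys)) [0..<m] = x"
  by (intro nth_equalityI) (auto simp: nth_append)

lemma map_nth_app1: "length zs = l \<Longrightarrow> length ys = m \<Longrightarrow> map (nth (zs @ ys @ w)) [l..<l+m] = ys"
  by (intro nth_equalityI) (auto simp: nth_append)

lemma set1_eq: "(\<forall>y. sat f [y] = (y \<in> A)) \<Longrightarrow> {xs \<in> tuples 1. sat f xs} = (\<lambda>x. [x]) ` A"
proof (intro equalityI subsetI)
  assume h: "\<forall>y. sat f [y] = (y \<in> A)"
  fix xs assume "xs \<in> {xs \<in> tuples 1. sat f xs}"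
  then obtain y where "xs = [y]" "sat f xs" by (auto simp: tuples_def length_Suc_conv)
  then show "xs \<in> (\<lambda>x. [x]) ` A" using h by blast
next
  assume h: "\<forall>y. sat f [y] = (y \<in> A)"
  fix xs assume "xs \<in> (\<lambda>x. [x]) ` A"
  then obtain y where "xs = [y]" "y \<in> A" by blast
  then show "xs \<in> {xs \<in> tuples 1. sat f xs}" using h by (simp add: tuples_def)
qed

definition Qp :: "'a list set \<Rightarrow> ('a list \<Rightarrow> 'a::linordered_ab_group_add) \<Rightarrow> nat \<Rightarrow> 'a list \<Rightarrow> 'a list \<Rightarrow> 'a \<Rightarrow> bool" where
  "Qp C \<phi> k p x t \<longleftrightarrow> x \<in> C \<and> \<phi> x < t \<and> (\<forall>i<k. x!i < p!i + t \<and> p!i < x!i + t)"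

definition Hs where "Hs C \<phi> k p = {x @ [t] | x t. Qp C \<phi> k p x t}"

definition LessS :: "'a::linorder list set" where "LessS = {[x, y] | x y. x < y}"
definition AddS :: "'a::linordered_ab_group_add list set" where "AddS = {[x, y, z] | x y z. x + y = z}"
definition Gr where "Gr C \<phi> = {xs @ [\<phi> xs] | xs. xs \<in> C}"

lemma LessS_mem[simp]: "([a, b] \<in> LessS) = (a < b)"
  by (simp add: LessS_def)
lemma AddS_mem[simp]: "([a, b, c] \<in> AddS) = (a + b = c)"
  by (auto simp: AddS_def)
lemma sat_const[simp]: "sat (Mem [i] {[a]}) xs = (xs ! i = a)"
  by simp

context
  fixes S :: "nat \<Rightarrow> ('a::linordered_ab_group_add) list set set" and m C \<phi>
  assumes ex: "expands_oag S" and Csub: "C \<subseteq> tuples m" and G: "Gr C \<phi> \<in> S (Suc m)"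
begin

lemma st: "is_structure S" using ex by (simp add: expands_oag_def)
lemma LessS_S: "LessS \<in> S (Suc (Suc 0))" using ex by (simp add: expands_oag_def LessS_def numeral_2_eq_2)
lemma AddS_S: "AddS \<in> S (Suc (Suc (Suc 0)))" using ex by (simp add: expands_oag_def AddS_def numeral_3_eq_3)
lemma const_S: "{[a]} \<in> S (Suc 0)" using ex by (simp add: expands_oag_def)

lemma Gr_mem: "length ys = m \<Longrightarrow> (ys @ [y] \<in> Gr C \<phi>) = (ys \<in> C \<and> y = \<phi> ys)"
  by (auto simp: Gr_def)

lemma Hs_mem: "(x @ [t] \<in> Hs C \<phi> k p) = Qp C \<phi> k p x t"
  by (auto simp: Hs_def)

lemma Qp_len: "Qp C \<phi> k p x t \<Longrightarrow> length x = m"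
  using Csub by (auto simp: Qp_def tuples_def)

lemma Hs_eq: "(\<forall>x t. length x = m \<longrightarrow> sat f (x @ [t]) = Qp C \<phi> k p x t) \<Longrightarrow>
   {xs \<in> tuples (Suc m). sat f xs} = Hs C \<phi> k p"
proof (intro equalityI subsetI)
  assume h: "\<forall>x t. length x = m \<longrightarrow> sat f (x @ [t]) = Qp C \<phi> k p x t"
  fix zs assume "zs \<in> {xs \<in> tuples (Suc m). sat f xs}"
  then obtain x t where zs: "zs = x @ [t]" "length x = m" "sat f zs" unfolding tuples_Suc by blast
  then show "zs \<in> Hs C \<phi> k p" using h by (simp add: Hs_mem)
next
  assume h: "\<forall>x t. length x = m \<longrightarrow> sat f (x @ [t]) = Qp C \<phi> k p x t"
  fix zs assume "zs \<in> Hs C \<phi> k p"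
  then obtain x t where zs: "zs = x @ [t]" "Qp C \<phi> k p x t" unfolding Hs_def by blast
  then have "length x = m" using Qp_len by blast
  then show "zs \<in> {xs \<in> tuples (Suc m). sat f xs}" using h zs by (simp add: tuples_def)
qed

lemma H0: "Hs C \<phi> 0 [] \<in> S (Suc m)"
proof -
  let ?f = "Ex (Conj (Mem ([0..<m] @ [Suc m]) (Gr C \<phi>)) (Mem [Suc m, m] LessS))"
  have "fwf S (Suc m) ?f" using G LessS_S by simp
  from fm_definable[OF st this] have "{xs \<in> tuples (Suc m). sat ?f xs} \<in> S (Suc m)" .
  moreover have "{xs \<in> tuples (Suc m). sat ?f xs} = Hs C \<phi> 0 [] "
  proof (rule Hs_eq, intro allI impI)
    fix x :: "'a list" and t :: 'a assume "length x = m"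
    then show "sat ?f (x @ [t]) = Qp C \<phi> 0 [] x t"
      by (simp add: map_nth_app0 nth_append Gr_mem Qp_def)
  qed
  ultimately show ?thesis by simp
qed

lemma ex3: "(\<exists>ys. length ys = 3 \<and> P ys) = (\<exists>a b c. P [a, b, c])"
proof
  assume "\<exists>ys. length ys = 3 \<and> P ys" then show "\<exists>a b c. P [a, b, c]" by (auto simp: numeral_3_eq_3 length_Suc_conv)
next
  assume "\<exists>a b c. P [a, b, c]" then obtain a b c where "P [a, b, c]" by blast
  then show "\<exists>ys. length ys = 3 \<and> P ys" by (intro exI[of _ "[a, b, c]"]) simp
qed

lemma tuples_1: "xs \<in> tuples 1 \<longleftrightarrow> (\<exists>y. xs = [y])"
  by (auto simp: tuples_def length_Suc_conv)

lemma Hstep: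
  assumes k: "k < m" and Hk: "Hs C \<phi> k p \<in> S (Suc m)" and lp: "length p = k"
  shows "Hs C \<phi> (Suc k) (p @ [a]) \<in> S (Suc m)"
proof -
  let ?f = "Exs 3 (Conj (Mem [m+1] {[a]}) (Conj (Mem [m+1,m,m+2] AddS) (Conj (Mem [k,m,m+3] AddS) (Conj (Mem [k,m+2] LessS) (Mem [m+1,m+3] LessS)))))"
  have "fwf S (Suc m) ?f" using AddS_S LessS_S const_S k by (simp add: wf_Exs)
  from fm_definable[OF st this] have E: "{xs \<in> tuples (Suc m). sat ?f xs} \<in> S (Suc m)" .
  have sf: "sat ?f (x @ [t]) = (x!k < a + t \<and> a < x!k + t)" if "length x = m" for x t
    using that k by (simp add: sat_Exs ex3 nth_append)
  have Qs: "Qp C \<phi> (Suc k) (p @ [a]) x t = (Qp C \<phi> k p x t \<and> x!k < a + t \<and> a < x!k + t)" for x t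
    using lp by (auto simp: Qp_def nth_append less_Suc_eq)
  have "Hs C \<phi> (Suc k) (p @ [a]) = Hs C \<phi> k p \<inter> {xs \<in> tuples (Suc m). sat ?f xs}"
  proof (intro equalityI subsetI)
    fix zs assume "zs \<in> Hs C \<phi> (Suc k) (p @ [a])"
    then obtain x t where "zs = x @ [t]" "Qp C \<phi> (Suc k) (p @ [a]) x t" by (auto simp: Hs_def)
    moreover have "length x = m" using calculation Qs Qp_len by blast
    ultimately show "zs \<in> Hs C \<phi> k p \<inter> {xs \<in> tuples (Suc m). sat ?f xs}"
      using Qs sf by (auto simp: Hs_mem tuples_def)
  next
    fix zs assume "zs \<in> Hs C \<phi> k p \<inter> {xs \<in> tuples (Suc m). sat ?f xs}"
    then obtain x t where "zs = x @ [t]" "Qp C \<phi> k p x t" "sat ?f (x @ [t])" by (auto simp: Hs_def)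
    moreover have "length x = m" using calculation Qp_len by blast
    ultimately show "zs \<in> Hs C \<phi> (Suc k) (p @ [a])" using Qs sf by (simp add: Hs_mem)
  qed
  thus ?thesis using S_inter[OF st Hk E] by simp
qed

lemma L_definable:
  assumes k: "k < m" and Hk: "Hs C \<phi> k p \<in> S (Suc m)"
  shows "definable_set1 S {y. \<exists>t>0. \<forall>x. Qp C \<phi> k p x t \<longrightarrow> y \<le> x!k}"
proof -
  let ?f = "Ex (Conj (Ex (Conj (Mem [2] {[0]}) (Mem [2,1] LessS))) (Neg (Exs m (Conj (Mem ([Suc (Suc 0)..<Suc (Suc m)]@[1]) (Hs C \<phi> k p)) (Mem [2+k, 0] LessS)))))"
  have "fwf S 1 ?f" using Hk LessS_S const_S k by (simp add: wf_Exs del: upt_Suc)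
  from fm_definable[OF st this] have E: "{xs \<in> tuples 1. sat ?f xs} \<in> S 1" .
  have mp: "map (nth (y # t # ys)) [Suc (Suc 0)..<Suc (Suc m)] = ys" if "length ys = m" for y t :: 'a and ys
    using that by (intro nth_equalityI) (auto simp: nth_append simp del: upt_Suc)
  have h: "sat ?f [y] = (\<exists>t>0. \<forall>x. Qp C \<phi> k p x t \<longrightarrow> y \<le> x!k)" for y
  proof -
    have "sat ?f [y] = (\<exists>t. 0 < t \<and> \<not> (\<exists>ys. length ys = m \<and> Qp C \<phi> k p ys t \<and> ys!k < y))"
      using k by (simp add: sat_Exs mp nth_append Hs_mem cong: conj_cong del: upt_Suc)
    also have "\<dots> = (\<exists>t>0. \<forall>x. Qp C \<phi> k p x t \<longrightarrow> y \<le> x!k)"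
      using Qp_len by (meson not_less)
    finally show ?thesis .
  qed
  have "{xs \<in> tuples 1. sat ?f xs} = (\<lambda>x. [x]) ` {y. \<exists>t>0. \<forall>x. Qp C \<phi> k p x t \<longrightarrow> y \<le> x!k}"
    apply (rule set1_eq) using h by simp
  thus ?thesis using E by (simp add: definable_set1_def)
qed

lemma img_def: "definable_set1 S (\<phi> ` C)"
proof -
  let ?f = "Exs m (Mem ([Suc 0..<Suc m]@[0]) (Gr C \<phi>))"
  have "fwf S 1 ?f" using G by (simp add: wf_Exs del: upt_Suc)
  from fm_definable[OF st this] have E: "{xs \<in> tuples 1. sat ?f xs} \<in> S 1" .
  have mp: "map (nth (y # ys)) [Suc 0..<Suc m] = ys" if "length ys = m" for y :: 'a and ys
    using that by (intro nth_equalityI) (auto simp: nth_append simp del: upt_Suc)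
  have h: "sat ?f [y] = (y \<in> \<phi> ` C)" for y
    using Csub by (auto simp: sat_Exs mp Gr_mem tuples_def cong: conj_cong simp del: upt_Suc)
  have "{xs \<in> tuples 1. sat ?f xs} = (\<lambda>x. [x]) ` (\<phi> ` C)"
    apply (rule set1_eq) using h by simp
  thus ?thesis using E by (simp add: definable_set1_def)
qed

end

lemma supdist_Cons: "supdist (a # x) (b # y) = max (max (a - b) (b - a)) (supdist x y)"
  by (simp add: supdist_def)

lemma supdist_Nil: "supdist [] y = 0" "supdist x [] = 0"
  by (auto simp: supdist_def)

lemma supdist_lt:
  fixes e :: "'a::linordered_ab_group_add"
  shows "length x = length y \<Longrightarrow> 0 < e \<Longrightarrow> (\<forall>i<length x. x!i < y!i + e \<and> y!i < x!i + e) \<Longrightarrow> supdist x y < e"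
proof (induction x arbitrary: y)
  case Nil then show ?case by (simp add: supdist_Nil)
next
  case (Cons a x)
  then obtain b y' where y: "y = b # y'" by (cases y) auto
  have "supdist x y' < e" using Cons y by (metis Suc_less_eq length_Cons nat.inject nth_Cons_Suc)
  moreover have "a < b + e" "b < a + e" using Cons(4) y by auto
  hence "max (a - b) (b - a) < e" by (simp add: algebra_simps)
  ultimately show ?case using y by (simp add: supdist_Cons)
qed

lemma supdist_ge:
  fixes x y :: "'a::linordered_ab_group_add list"
  shows "length x = length y \<Longrightarrow> i < length x \<Longrightarrow> max (x!i - y!i) (y!i - x!i) \<le> supdist x y"
proof (induction x arbitrary: y i)
  case Nil then show ?case by simp
next
  case (Cons a x)
  then obtain b y' where y: "y = b # y'" by (cases y) auto
  show ?case
  proof (cases i)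
    case 0 then show ?thesis using y by (simp add: supdist_Cons)
  next
    case (Suc j)
    then have "max (x!j - y'!j) (y'!j - x!j) \<le> supdist x y'" using Cons y by simp
    then show ?thesis using y Suc by (simp add: supdist_Cons le_max_iff_disj)
  qed
qed

lemma Qp_mono: "t1 \<le> t2 \<Longrightarrow> Qp C \<phi> k p x t1 \<Longrightarrow> Qp C \<phi> k p x t2"
  unfolding Qp_def by (meson add_left_mono order_less_le_trans order.strict_trans2)

lemma step_sup:
  fixes S :: "nat \<Rightarrow> ('a::linordered_ab_group_add) list set set"
  assumes ex: "expands_oag S" and Csub: "C \<subseteq> tuples m" and G: "Gr C \<phi> \<in> S (Suc m)"
    and dc: "definably_complete S" and R: "\<forall>x\<in>C. \<forall>i<m. - R \<le> x!i \<and> x!i \<le> R"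
    and t0: "(0::'a) < t0"
    and k: "k < m" and Hk: "Hs C \<phi> k p \<in> S (Suc m)"
    and N: "\<forall>t>0. \<exists>x. Qp C \<phi> k p x t" and lp: "length p = k"
  shows "\<exists>a. \<forall>t>0. \<exists>x. Qp C \<phi> (Suc k) (p @ [a]) x t"
proof -
  define L where "L = {y. \<exists>t>0. \<forall>x. Qp C \<phi> k p x t \<longrightarrow> y \<le> x!k}"
  have dL: "definable_set1 S L" unfolding L_def using L_definable[OF ex Csub G k Hk] .
  have "-R \<in> L" unfolding L_def using t0 R k by (auto simp: Qp_def)
  hence ne: "L \<noteq> {}" by blast
  have ub: "\<forall>y\<in>L. y \<le> R"
  proof
    fix y assume "y \<in> L"
    then obtain t where "t > 0" "\<forall>x. Qp C \<phi> k p x t \<longrightarrow> y \<le> x!k" unfolding L_def by blast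
    moreover obtain x where "Qp C \<phi> k p x t" using N calculation by blast
    ultimately show "y \<le> R" using R k by (force simp: Qp_def)
  qed
  obtain a where a1: "\<forall>y\<in>L. y \<le> a" and a2: "\<forall>b. (\<forall>y\<in>L. y \<le> b) \<longrightarrow> a \<le> b"
    using dc dL ne ub unfolding definably_complete_def by blast
  have "\<forall>t>0. \<exists>x. Qp C \<phi> (Suc k) (p @ [a]) x t"
  proof (intro allI impI)
    fix t :: 'a assume t: "0 < t"
    have lt: "a - t < a" using t by simp
    have "\<not> (\<forall>y\<in>L. y \<le> a - t)"
    proof
      assume "\<forall>y\<in>L. y \<le> a - t"
      hence "a \<le> a - t" using a2 by blast
      thus False using lt by simp
    qed
    then obtain y where yL: "y \<in> L" and ya: "a - t < y" by (auto simp: not_le)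
    then obtain t2 where t2: "t2 > 0" "\<forall>x. Qp C \<phi> k p x t2 \<longrightarrow> y \<le> x!k" unfolding L_def by blast
    have lt2: "a < a + t" using t by simp
    have "a + t \<notin> L"
    proof
      assume "a + t \<in> L"
      hence "a + t \<le> a" using a1 by blast
      thus False using lt2 by simp
    qed
    hence "\<not> (\<forall>x. Qp C \<phi> k p x (min t t2) \<longrightarrow> a + t \<le> x!k)" unfolding L_def using t t2 by auto
    then obtain x where x: "Qp C \<phi> k p x (min t t2)" "x!k < a + t" by (auto simp: not_le)
    have "Qp C \<phi> k p x t2" "Qp C \<phi> k p x t" using x Qp_mono by (metis min.cobounded1 min.cobounded2)+
    hence "y \<le> x!k" using t2 by blast
    have h1: "a < y + t" using ya by (simp add: diff_less_eq)
    have h2: "y + t \<le> x!k + t" using \<open>y \<le> x!k\<close> by (rule add_right_mono)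
    from h1 h2 have "a < x!k + t" by (rule less_le_trans)
    hence "Qp C \<phi> (Suc k) (p @ [a]) x t" using \<open>Qp C \<phi> k p x t\<close> x lp
      by (auto simp: Qp_def nth_append less_Suc_eq)
    thus "\<exists>x. Qp C \<phi> (Suc k) (p @ [a]) x t" by blast
  qed
  thus ?thesis by blast
qed

theorem mainTheorem14:
  fixes S :: "nat \<Rightarrow> ('a::linordered_ab_group_add) list set set"
    and m :: nat and C :: "'a list set" and \<phi> \<psi> :: "'a list \<Rightarrow> 'a"
  assumes "expands_oag S" and "definably_complete S" and "locally_o_minimal S"
    and "C \<in> S m" and "closed_in_tuples m C" and "bounded_tuples C"
    and "definable_fun S m C \<phi>" and "definable_fun S m C \<psi>"
    and "\<forall>x\<in>C. 0 < \<phi> x" and "\<forall>x\<in>C. 0 < \<psi> x"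
    and "\<forall>x\<in>C. \<exists>\<delta>>0. \<forall>x'\<in>C. supdist x' x < \<delta> \<longrightarrow> \<psi> x \<le> \<phi> x'"
  shows "C = {} \<or> (\<exists>s. is_glb s (\<phi> ` C) \<and> 0 < s)"
proof (cases "C = {}")
  case True then show ?thesis by simp
next
  case False
  note ex = assms(1) and dc = assms(2)
  have Csub: "C \<subseteq> tuples m" using assms(5) by (simp add: closed_in_tuples_def)
  have G: "Gr C \<phi> \<in> S (Suc m)" using assms(7) by (simp add: definable_fun_def Gr_def)
  obtain R where R0: "\<forall>x\<in>C. supdist x (map (\<lambda>_. 0) x) \<le> R" using assms(6) by (auto simp: bounded_tuples_def)
  have R: "\<forall>x\<in>C. \<forall>i<m. - R \<le> x!i \<and> x!i \<le> R"
  proof (intro ballI allI impI)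
    fix x i assume x: "x \<in> C" and i: "i < m"
    have "length x = m" using x Csub by (auto simp: tuples_def)
    hence "max (x!i - (map (\<lambda>_. 0) x)!i) ((map (\<lambda>_. 0) x)!i - x!i) \<le> R"
      using supdist_ge[of x "map (\<lambda>_. 0) x" i] R0 x i by force
    thus "- R \<le> x!i \<and> x!i \<le> R" using i \<open>length x = m\<close> by (auto simp: minus_le_iff)
  qed
  obtain x0 where x0: "x0 \<in> C" using False by blast
  define t0 where "t0 = \<phi> x0"
  have t0: "0 < t0" using assms(9) x0 by (simp add: t0_def)
  have lb: "\<exists>t>0. \<forall>x\<in>C. t \<le> \<phi> x"
  proof (rule ccontr)
    assume "\<not> ?thesis"
    hence Nall: "\<forall>t>0. \<exists>x\<in>C. \<phi> x < t" by (auto simp: not_le)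
    have ind: "k \<le> m \<Longrightarrow> \<exists>p. length p = k \<and> Hs C \<phi> k p \<in> S (Suc m) \<and> (\<forall>t>0. \<exists>x. Qp C \<phi> k p x t)" for k
    proof (induction k)
      case 0
      have "\<forall>t>0. \<exists>x. Qp C \<phi> 0 [] x t" using Nall by (auto simp: Qp_def)
      then show ?case using H0[OF ex Csub G] by auto
    next
      case (Suc k)
      then obtain p where p: "length p = k" "Hs C \<phi> k p \<in> S (Suc m)" "\<forall>t>0. \<exists>x. Qp C \<phi> k p x t" by auto
      have k: "k < m" using Suc by simp
      obtain a where a: "\<forall>t>0. \<exists>x. Qp C \<phi> (Suc k) (p @ [a]) x t"
        using step_sup[OF ex Csub G dc R t0 k p(2) p(3) p(1)] by blast
      moreover have "Hs C \<phi> (Suc k) (p @ [a]) \<in> S (Suc m)" using Hstep[OF ex Csub G k p(2) p(1)] .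
      ultimately show ?case using p(1) by (intro exI[of _ "p @ [a]"]) simp
    qed
    obtain p where p: "length p = m" "\<forall>t>0. \<exists>x. Qp C \<phi> m p x t" using ind[of m] by auto
    have close: "\<exists>x\<in>C. \<phi> x < t \<and> supdist x p < t" if tpos: "0 < t" for t
    proof -
      obtain x where x: "Qp C \<phi> m p x t" using p tpos by blast
      have "length x = m" using x Csub by (auto simp: Qp_def tuples_def)
      hence "supdist x p < t" using supdist_lt[of x p t] x p tpos by (auto simp: Qp_def)
      thus ?thesis using x by (auto simp: Qp_def)
    qed
    have pC: "p \<in> C"
    proof (rule ccontr)
      assume "p \<notin> C"
      hence "p \<in> tuples m - C" using p by (simp add: tuples_def)
      then obtain e where "e > 0" "\<forall>y\<in>C. \<not> supdist y p < e" using assms(5) unfolding closed_in_tuples_def by blast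
      thus False using close by blast
    qed
    obtain \<delta> where d: "\<delta> > 0" "\<forall>x'\<in>C. supdist x' p < \<delta> \<longrightarrow> \<psi> p \<le> \<phi> x'" using assms(11) pC by blast
    have "0 < min \<delta> (\<psi> p)" using d assms(10) pC by simp
    then obtain x where "x \<in> C" "\<phi> x < min \<delta> (\<psi> p)" "supdist x p < min \<delta> (\<psi> p)" using close by blast
    thus False using d by fastforce
  qed
  then obtain t where t: "t > 0" "\<forall>x\<in>C. t \<le> \<phi> x" by blast
  have dI: "definable_set1 S (\<phi> ` C)" using img_def[OF ex Csub G] .
  have ne: "\<phi> ` C \<noteq> {}" using False by simp
  have lbd: "\<exists>b. \<forall>y\<in>\<phi> ` C. b \<le> y" using t by blast
  have dc2: "\<forall>A. definable_set1 S A \<longrightarrow> A \<noteq> {} \<longrightarrow> (\<exists>b. \<forall>x\<in>A. b \<le> x) \<longrightarrow>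
        (\<exists>s. (\<forall>x\<in>A. s \<le> x) \<and> (\<forall>b. (\<forall>x\<in>A. b \<le> x) \<longrightarrow> b \<le> s))"
    using dc unfolding definably_complete_def by (rule conjunct2)
  obtain s where s1: "\<forall>y\<in>\<phi> ` C. s \<le> y" and s2: "\<forall>b. (\<forall>y\<in>\<phi> ` C. b \<le> y) \<longrightarrow> b \<le> s"
    using dc2[rule_format, OF dI ne lbd] by blast
  have "t \<le> s" using s2 t by blast
  hence "0 < s" using t(1) by simp
  moreover have "is_glb s (\<phi> ` C)" unfolding is_glb_def using s1 s2 by blast
  ultimately show ?thesis by blast
qed

end
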